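(* For all integers $v\ge1$ and $0\le n\le v-1$, $$B^{(2v)}_{2n}(v)=(-1)^n(2n)!\,\frac{\Gamma(2v-2n)}{\Gamma(2v)}\,s(v,n)=(-1)^n\,2^{-2n}(2n)!\,c_{2v,n}.$$
   Context: The Nörlund polynomials (higher-order Bernoulli polynomials) $B^{(a)}_n(x)$ are defined by $\left(\frac{t}{e^t-1}\right)^a e^{xt}=\sum_{n\ge0}B^{(a)}_n(x)\frac{t^n}{n!}$. For integers $v\ge1$ and $0\le n\le v-1$, $s(v,n)$ denotes the $n$-th elementary symmetric polynomial evaluated at $1^2,2^2,\dots,(v-1)^2$, with $s(v,0)=1$. The generalized cosecant numbers $c_{\rho,k}$ are the coefficients in $\left(\frac{x}{\sin x}\right)^{\rho}=\sum_{k\ge0}c_{\rho,k}x^{2k}$. *)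

theory Defs
  imports "HOL-Analysis.Analysis" "HOL-Computational_Algebra.Formal_Power_Series"
begin

definition norlund :: "nat \<Rightarrow> nat \<Rightarrow> real \<Rightarrow> real" where
  "norlund a n x = fact n * fps_nth ((fps_X / (fps_exp 1 - 1)) ^ a * fps_exp x) n"

definition esym_sq :: "nat \<Rightarrow> nat \<Rightarrow> real" where
  "esym_sq v n = (\<Sum>S | S \<subseteq> {1..v-1} \<and> card S = n. \<Prod>k\<in>S. (real k)^2)"

definition cosec_num :: "nat \<Rightarrow> nat \<Rightarrow> real" where
  "cosec_num \<rho> k = fps_nth ((fps_X / fps_sin 1) ^ \<rho>) (2 * k)"

end

theory Submission
  imports Defs
begin


definition gg :: "real fps" where "gg = fps_X / (fps_exp 1 - 1)"

lemma E1_ne: "(fps_exp (1::real) - 1) \<noteq> 0"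
proof
  assume "fps_exp (1::real) - 1 = 0"
  hence "fps_nth (fps_exp (1::real) - 1) 1 = 0" by simp
  thus False by simp
qed

lemma E1_sub: "subdegree (fps_exp (1::real) - 1) = 1"
  by (rule subdegreeI) auto

lemma gg_mult: "gg * (fps_exp 1 - 1) = fps_X"
  unfolding gg_def
  using fps_times_divide_eq[OF E1_ne, of fps_X] E1_sub by simp

lemma gg_deriv: "fps_X * fps_deriv gg = gg - fps_exp 1 * gg^2"
proof -
  have "fps_deriv (gg * (fps_exp 1 - 1)) = 1" by (simp add: gg_mult)
  hence d: "fps_deriv gg * (fps_exp 1 - 1) + gg * fps_exp 1 = 1"
    by (auto simp: fps_deriv_mult ac_simps)
  have "(fps_X * fps_deriv gg) * (fps_exp 1 - 1) = (gg - fps_exp 1 * gg^2) * (fps_exp 1 - 1)"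
  proof -
    have "(fps_X * fps_deriv gg) * (fps_exp 1 - 1) = fps_X * (1 - gg * fps_exp 1)"
      using d by (metis add_diff_cancel_right' mult.assoc)
    also have "\<dots> = gg * (fps_exp 1 - 1) * (1 - gg * fps_exp 1)" by (simp add: gg_mult)
    also have "\<dots> = (gg - fps_exp 1 * gg^2) * (fps_exp 1 - 1)" by (simp add: algebra_simps power2_eq_square)
    finally show ?thesis .
  qed
  thus ?thesis using E1_ne by simp
qed

lemma ggpow_deriv: "fps_X * fps_deriv (gg^a) = of_nat a * gg^a - of_nat a * fps_exp 1 * gg^(a+1)"
proof (cases a)
  case 0 then show ?thesis by simp
next
  case (Suc m)
  have "fps_deriv (gg^a) = of_nat a * fps_deriv gg * gg^m"
    using fps_deriv_power'[of gg a] Suc by simp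
  hence "fps_X * fps_deriv (gg^a) = of_nat a * gg^m * (fps_X * fps_deriv gg)"
    by (simp add: algebra_simps)
  also have "\<dots> = of_nat a * gg^m * (gg - fps_exp 1 * gg^2)" by (simp add: gg_deriv)
  also have "\<dots> = of_nat a * gg^a - of_nat a * fps_exp 1 * gg^(a+1)"
    by (simp add: Suc algebra_simps power2_eq_square)
  finally show ?thesis .
qed

lemma gg_0: "fps_nth gg 0 = 1"
proof -
  have "fps_nth (gg * (fps_exp 1 - 1)) 1 = 1" by (simp add: gg_mult)
  thus ?thesis by (simp add: fps_mult_nth)
qed

lemma norlund_gg: "norlund a n x = fact n * fps_nth (gg^a * fps_exp x) n"
  by (simp add: norlund_def gg_def)

lemma rec_lemma:
  assumes "a \<ge> 1"
  shows "norlund (a+1) a (x+1) = x * norlund a (a-1) x"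
proof -
  define W where "W = gg^a * fps_exp x"
  have "fps_X * fps_deriv W = (fps_X * fps_deriv (gg^a)) * fps_exp x + fps_const x * (fps_X * W)"
    by (simp add: W_def algebra_simps)
  also have "\<dots> = (of_nat a * gg^a - of_nat a * fps_exp 1 * gg^(a+1)) * fps_exp x + fps_const x * (fps_X * W)"
    by (simp only: ggpow_deriv)
  also have "\<dots> = of_nat a * W - of_nat a * (gg^(a+1) * fps_exp (x+1)) + fps_const x * (fps_X * W)"
    by (simp add: W_def fps_exp_add_mult algebra_simps)
  finally have eq: "fps_X * fps_deriv W = of_nat a * W - of_nat a * (gg^(a+1) * fps_exp (x+1)) + fps_const x * (fps_X * W)" .
  obtain m where m: "a = Suc m" using assms by (cases a) auto
  have c1: "fps_nth (fps_X * fps_deriv W) a = real a * fps_nth W a"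
    by (simp add: m)
  have c2: "fps_nth (of_nat a * W) a = real a * fps_nth W a"
    by (simp add: fps_of_nat[symmetric] del: of_nat_Suc)
  have c3: "fps_nth (of_nat a * (gg^(a+1) * fps_exp (x+1))) a = real a * fps_nth (gg^(a+1) * fps_exp (x+1)) a"
    by (simp add: fps_of_nat[symmetric] del: of_nat_Suc)
  have c4: "fps_nth (fps_const x * (fps_X * W)) a = x * fps_nth W m"
    by (simp add: m)
  have "fps_nth (fps_X * fps_deriv W) a = fps_nth (of_nat a * W - of_nat a * (gg^(a+1) * fps_exp (x+1)) + fps_const x * (fps_X * W)) a"
    using eq by simp
  hence "real a * fps_nth W a = real a * fps_nth W a - real a * fps_nth (gg^(a+1) * fps_exp (x+1)) a + x * fps_nth W m"
    by (simp only: c1 c2 c3 c4 fps_add_nth fps_sub_nth)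
  hence key: "real a * fps_nth (gg^(a+1) * fps_exp (x+1)) a = x * fps_nth W m" by simp
  have "norlund (a+1) a (x+1) = fact m * (real a * fps_nth (gg^(a+1) * fps_exp (x+1)) a)"
    by (simp add: norlund_gg m)
  also have "\<dots> = x * norlund a (a-1) x" unfolding key by (simp add: norlund_gg W_def m)
  finally show ?thesis .
qed

lemma Q_lemma: "norlund (Suc m) m x = (\<Prod>j<m. x - real (Suc j))"
proof (induction m arbitrary: x)
  case 0 then show ?case by (simp add: norlund_gg gg_0)
next
  case (Suc m)
  have "norlund (Suc (Suc m)) (Suc m) x = norlund (Suc m + 1) (Suc m) ((x - 1) + 1)" by simp
  also have "\<dots> = (x - 1) * norlund (Suc m) m (x - 1)" using rec_lemma[of "Suc m" "x - 1"] by simp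
  also have "\<dots> = (x - 1) * (\<Prod>j<m. x - 1 - real (Suc j))" by (simp only: Suc.IH)
  also have "\<dots> = (\<Prod>j<Suc m. x - real (Suc j))"
    by (simp only: prod.lessThan_Suc_shift) (simp add: algebra_simps)
  finally show ?case .
qed



lemma shift_prod: "(\<Prod>j<2*w+1. real (Suc w) + y - real (Suc j)) = y * (\<Prod>j<w. y^2 - real (Suc j)^2)"
proof (induction w)
  case 0 then show ?case by simp
next
  case (Suc w)
  have "(\<Prod>j<2*Suc w+1. real (Suc (Suc w)) + y - real (Suc j))
      = (real (Suc w) + y) * (\<Prod>j<Suc (2*w+1). real (Suc (Suc w)) + y - real (Suc (Suc j)))"
    by (simp only: prod.lessThan_Suc_shift mult_2 add_Suc add_Suc_right) simp
  also have "(\<Prod>j<Suc (2*w+1). real (Suc (Suc w)) + y - real (Suc (Suc j)))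
      = (\<Prod>j<2*w+1. real (Suc w) + y - real (Suc j)) * (y - real (Suc w))"
    by (simp add: algebra_simps)
  also note Suc.IH
  finally show ?case by (simp add: algebra_simps power2_eq_square)
qed

lemma esym_expand: "(\<Prod>j<w. y^2 - real (Suc j)^2) = (\<Sum>n\<le>w. (-1)^n * esym_sq (Suc w) n * y^(2*(w-n)))"
proof -
  have "(\<Prod>j<w. y^2 - real (Suc j)^2) = (\<Prod>j\<in>{1..w}. (- ((real j)^2) + y^2))"
    by (simp add: prod.atLeast1_atMost_eq)
  also have "\<dots> = (\<Sum>X\<in>Pow {1..w}. (\<Prod>j\<in>X. (- ((real j)^2))) * (\<Prod>j\<in>{1..w}-X. y^2))"
    by (rule prod_add) simp
  also have "\<dots> = (\<Sum>X\<in>Pow {1..w}. (-1)^card X * (\<Prod>j\<in>X. (real j)^2) * y^(2*(w - card X)))"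
  proof (rule sum.cong[OF refl])
    fix X assume X: "X \<in> Pow {1..w}"
    hence fX: "finite X" using finite_subset by auto
    have "card ({1..w} - X) = w - card X" using X fX by (simp add: card_Diff_subset)
    moreover have "(\<Prod>j\<in>X. (- ((real j)^2))) = (-1)^card X * (\<Prod>j\<in>X. (real j)^2)"
      by (simp add: prod_uminus)
    ultimately show "(\<Prod>j\<in>X. (- ((real j)^2))) * (\<Prod>j\<in>{1..w}-X. y^2) = (-1)^card X * (\<Prod>j\<in>X. (real j)^2) * y^(2*(w - card X))"
      by (simp add: power_mult[symmetric] mult.commute)
  qed
  also have "\<dots> = (\<Sum>n\<le>w. \<Sum>X\<in>{X\<in>Pow {1..w}. card X = n}. (-1)^card X * (\<Prod>j\<in>X. (real j)^2) * y^(2*(w - card X)))"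
  proof (rule sum.group[symmetric])
    show "card ` Pow {1..w} \<subseteq> {..w}"
    proof
      fix k assume "k \<in> card ` Pow {1..w}"
      then obtain X where "X \<subseteq> {1..w}" "k = card X" by auto
      hence "k \<le> card {1..w}" using card_mono[of "{1..w}" X] by simp
      thus "k \<in> {..w}" by simp
    qed
  qed auto
  also have "\<dots> = (\<Sum>n\<le>w. (-1)^n * esym_sq (Suc w) n * y^(2*(w-n)))"
  proof (rule sum.cong[OF refl])
    fix n assume "n \<in> {..w}"
    have "(\<Sum>X\<in>{X\<in>Pow {1..w}. card X = n}. (-1)^card X * (\<Prod>j\<in>X. (real j)^2) * y^(2*(w - card X)))
        = (\<Sum>X\<in>{X\<in>Pow {1..w}. card X = n}. (-1)^n * y^(2*(w - n)) * (\<Prod>j\<in>X. (real j)^2))"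
      by (rule sum.cong) auto
    also have "\<dots> = (-1)^n * y^(2*(w - n)) * (\<Sum>X\<in>{X\<in>Pow {1..w}. card X = n}. (\<Prod>j\<in>X. (real j)^2))"
      by (simp add: sum_distrib_left)
    also have "{X\<in>Pow {1..w}. card X = n} = {S. S \<subseteq> {1..Suc w - 1} \<and> card S = n}" by auto
    finally show "(\<Sum>X\<in>{X\<in>Pow {1..w}. card X = n}. (-1)^card X * (\<Prod>j\<in>X. (real j)^2) * y^(2*(w - card X)))
        = (-1)^n * esym_sq (Suc w) n * y^(2*(w-n))" by (simp add: esym_sq_def)
  qed
  finally show ?thesis .
qed

lemma reindex_odd: "(\<Sum>n\<le>w. c n * (y::real)^(2*(w-n)+1)) = (\<Sum>m\<le>2*w+1. (if odd m then c ((2*w+1-m) div 2) else 0) * y^m)"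
proof (induction w arbitrary: c)
  case 0 then show ?case by simp
next
  case (Suc w)
  have "(\<Sum>n\<le>Suc w. c n * y^(2*(Suc w-n)+1)) = c 0 * y^(2*w+3) + (\<Sum>n\<le>w. c (Suc n) * y^(2*(w-n)+1))"
    by (simp only: sum.atMost_Suc_shift diff_Suc_Suc) (simp add: numeral_3_eq_3)
  also have "(\<Sum>n\<le>w. c (Suc n) * y^(2*(w-n)+1)) = (\<Sum>m\<le>2*w+1. (if odd m then c (Suc ((2*w+1-m) div 2)) else 0) * y^m)"
    using Suc.IH[of "\<lambda>n. c (Suc n)"] by simp
  also have "\<dots> = (\<Sum>m\<le>2*w+1. (if odd m then c ((2*Suc w+1-m) div 2) else 0) * y^m)"
  proof (rule sum.cong[OF refl])
    fix m assume "m \<in> {..2*w+1}"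
    hence "(2*Suc w+1-m) div 2 = Suc ((2*w+1-m) div 2)" by auto
    thus "(if odd m then c (Suc ((2*w+1-m) div 2)) else 0) * y^m = (if odd m then c ((2*Suc w+1-m) div 2) else 0) * y^m" by simp
  qed
  finally show ?case
    by (simp add: numeral_3_eq_3 sum.atMost_Suc)
qed

lemma expansion: "norlund a N (v+y) = (\<Sum>m\<le>N. (fact N * fps_nth (gg^a * fps_exp v) (N-m) / fact m) * y^m)"
proof -
  have eq: "gg^a * fps_exp (v+y) = fps_exp y * (gg^a * fps_exp v)"
    by (simp add: fps_exp_add_mult algebra_simps)
  have "norlund a N (v+y) = fact N * fps_nth (fps_exp y * (gg^a * fps_exp v)) N"
    by (simp only: norlund_gg eq)
  also have "\<dots> = fact N * (\<Sum>i=0..N. y^i / fact i * fps_nth (gg^a * fps_exp v) (N-i))"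
    unfolding fps_mult_nth[of "fps_exp y"] fps_exp_nth by (simp only: of_nat_fact)
  also have "\<dots> = (\<Sum>m\<le>N. (fact N * fps_nth (gg^a * fps_exp v) (N-m) / fact m) * y^m)"
    by (simp add: sum_distrib_left atLeast0AtMost mult_ac)
  finally show ?thesis .
qed



lemma part1:
  assumes n: "n \<le> w"
  shows "norlund (2 * Suc w) (2 * n) (real (Suc w))
     = (-1)^n * fact (2 * n) * (Gamma (real (2 * Suc w - 2 * n)) / Gamma (real (2 * Suc w))) * esym_sq (Suc w) n"
proof -
  define N where "N = 2*w+1"
  define v where "v = real (Suc w)"
  define W where "W = gg^(2 * Suc w) * fps_exp v"
  define d where "d = (\<lambda>m. (if odd m then (-1)^((2*w+1-m) div 2) * esym_sq (Suc w) ((2*w+1-m) div 2) else 0))"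
  have a: "2 * Suc w = Suc N" by (simp add: N_def)
  have "\<forall>y. (\<Sum>m\<le>N. (fact N * fps_nth W (N-m) / fact m) * y^m) = (\<Sum>m\<le>N. d m * y^m)"
  proof
    fix y :: real
    have "(\<Sum>m\<le>N. (fact N * fps_nth W (N-m) / fact m) * y^m) = norlund (Suc N) N (v+y)"
      unfolding W_def a by (rule expansion[symmetric])
    also have "\<dots> = (\<Prod>j<2*w+1. real (Suc w) + y - real (Suc j))"
      by (simp add: Q_lemma N_def v_def)
    also have "\<dots> = y * (\<Sum>n\<le>w. (-1)^n * esym_sq (Suc w) n * y^(2*(w-n)))"
      by (simp only: shift_prod esym_expand)
    also have "\<dots> = (\<Sum>n\<le>w. ((-1)^n * esym_sq (Suc w) n) * y^(2*(w-n)+1))"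
      by (simp add: sum_distrib_left mult_ac)
    also have "\<dots> = (\<Sum>m\<le>N. d m * y^m)"
      unfolding N_def d_def by (rule reindex_odd)
    finally show "(\<Sum>m\<le>N. (fact N * fps_nth W (N-m) / fact m) * y^m) = (\<Sum>m\<le>N. d m * y^m)" .
  qed
  hence co: "\<forall>m\<le>N. fact N * fps_nth W (N-m) / fact m = d m"
    by (simp only: polyfun_eq_coeffs)
  have mN: "N - 2*n \<le> N" by simp
  have e1: "N - (N - 2*n) = 2*n" using n by (simp add: N_def)
  have e2: "odd (N - 2*n)" using n by (simp add: N_def)
  have e3: "(2*w+1 - (N - 2*n)) div 2 = n" using n by (simp add: N_def)
  have "fact N * fps_nth W (2*n) / fact (N - 2*n) = (-1)^n * esym_sq (Suc w) n"
  proof -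
    have "d (N - 2*n) = (-1)^n * esym_sq (Suc w) n" by (simp only: d_def e2 e3 if_True not_False_eq_True)
    thus ?thesis using co[rule_format, OF mN] by (simp only: e1)
  qed
  hence Wn: "fps_nth W (2*n) = (-1)^n * esym_sq (Suc w) n * fact (N - 2*n) / fact N"
    by (simp add: field_simps)
  have g1: "Gamma (real (2 * Suc w - 2 * n)) = fact (N - 2*n)"
  proof -
    have "real (2 * Suc w - 2 * n) = 1 + real (N - 2*n)" using n by (simp add: N_def)
    thus ?thesis by (simp add: Gamma_fact)
  qed
  have g2: "Gamma (real (2 * Suc w)) = fact N"
  proof -
    have "real (2 * Suc w) = 1 + real N" by (simp add: N_def)
    thus ?thesis by (simp add: Gamma_fact)
  qed
  have "norlund (2 * Suc w) (2 * n) (real (Suc w)) = fact (2*n) * fps_nth W (2*n)"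
    unfolding W_def v_def by (rule norlund_gg)
  thus ?thesis unfolding g1 g2 Wn by simp
qed



definition kk :: "real fps" where "kk = gg * fps_exp (1/2)"
definition hh :: "real fps" where "hh = fps_X / fps_sin 1"

lemma kk_rel: "kk * (fps_exp (1/2) - fps_exp (-1/2)) = fps_X"
proof -
  have "kk * (fps_exp (1/2) - fps_exp (-1/2)) = gg * (fps_exp (1/2) * fps_exp (1/2) - fps_exp (1/2) * fps_exp (-1/2))"
    by (simp add: kk_def algebra_simps)
  also have "fps_exp (1/2) * fps_exp (1/2) = fps_exp (1::real)"
    by (simp flip: fps_exp_add_mult)
  also have "fps_exp (1/2) * fps_exp (-1/2) = (1::real fps)"
    by (simp flip: fps_exp_add_mult)
  finally show ?thesis by (simp add: gg_mult)
qed

lemma kk_pow: "gg^(2 * v) * fps_exp (real v) = kk^(2 * v)"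
proof -
  have "kk^(2 * v) = gg^(2 * v) * fps_exp (1/2) ^ (2 * v)" by (simp add: kk_def power_mult_distrib)
  also have "fps_exp (1/2::real) ^ (2 * v) = fps_exp (real v)"
    by (simp add: fps_exp_power_mult)
  finally show ?thesis by simp
qed

lemma sin_ne: "fps_sin (1::real) \<noteq> 0"
proof
  assume "fps_sin (1::real) = 0"
  hence "fps_nth (fps_sin (1::real)) 1 = 0" by simp
  thus False by simp
qed

lemma hh_mult: "hh * fps_sin 1 = fps_X"
proof -
  have "subdegree (fps_sin (1::real)) = 1" by (rule subdegreeI) auto
  thus ?thesis unfolding hh_def using fps_times_divide_eq[OF sin_ne, of fps_X] by simp
qed

definition cf :: "real fps \<Rightarrow> complex fps" where "cf f = Abs_fps (\<lambda>n. complex_of_real (fps_nth f n))"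
definition sc :: "complex \<Rightarrow> complex fps \<Rightarrow> complex fps" where "sc c f = Abs_fps (\<lambda>n. c^n * fps_nth f n)"

lemma cf_nth[simp]: "fps_nth (cf f) n = complex_of_real (fps_nth f n)" by (simp add: cf_def)
lemma sc_nth[simp]: "fps_nth (sc c f) n = c^n * fps_nth f n" by (simp add: sc_def)

lemma cf_mult: "cf (f * g) = cf f * cf g"
  by (rule fps_ext) (simp add: fps_mult_nth)
lemma cf_one: "cf 1 = 1"
  by (rule fps_ext) simp
lemma cf_pow: "cf (f ^ n) = cf f ^ n"
  by (induction n) (simp_all add: cf_mult cf_one)
lemma cf_X: "cf fps_X = fps_X"
  by (rule fps_ext) (simp add: fps_X_def)
lemma cf_diff: "cf (f - g) = cf f - cf g"
  by (rule fps_ext) simp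
lemma cf_exp: "cf (fps_exp r) = fps_exp (complex_of_real r)"
  by (rule fps_ext) simp
lemma cf_sin: "cf (fps_sin 1) = fps_sin 1"
  by (rule fps_ext) (simp add: fps_sin_def)

lemma sc_mult: "sc c (f * g) = sc c f * sc c g"
proof (rule fps_ext)
  fix n
  show "fps_nth (sc c (f * g)) n = fps_nth (sc c f * sc c g) n"
    by (simp add: fps_mult_nth sum_distrib_left power_add[symmetric] mult_ac)
qed
lemma sc_one: "sc c 1 = 1"
  by (rule fps_ext) simp
lemma sc_pow: "sc c (f ^ n) = sc c f ^ n"
  by (induction n) (simp_all add: sc_mult sc_one)
lemma sc_X: "sc c fps_X = fps_const c * fps_X"
  by (rule fps_ext) (simp add: fps_X_def)
lemma sc_sin: "sc c (fps_sin 1) = fps_sin c"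
  by (rule fps_ext) (simp add: fps_sin_def)



lemma sin_half_ii: "fps_sin (\<i>/2) = fps_const (\<i>/2) * (fps_exp (1/2) - fps_exp (-1/2))"
proof -
  have a1: "\<i> * (\<i>/2) = (-1/2::complex)" by simp
  have a2: "- \<i> * (\<i>/2) = (1/2::complex)" by simp
  have c0: "fps_nth (fps_const (2*\<i>)) 0 \<noteq> 0" by simp
  have "fps_sin (\<i>/2) = (fps_exp (\<i> * (\<i>/2)) - fps_exp (- \<i> * (\<i>/2))) / fps_const (2*\<i>)"
    by (rule fps_sin_fps_exp_ii)
  also have "\<dots> = (fps_exp (-1/2) - fps_exp (1/2)) * fps_const (inverse (2*\<i>))"
    unfolding a1 a2 fps_divide_unit[OF c0] fps_const_inverse ..
  also have "inverse (2*\<i>) = - (\<i>/2)" by (simp add: field_simps)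
  also have "(fps_exp (-1/2) - fps_exp (1/2)) * fps_const (- (\<i>/2)) = fps_const (\<i>/2) * (fps_exp (1/2) - fps_exp (-1/2::complex))"
    by (rule fps_ext) (simp add: algebra_simps)
  finally show ?thesis .
qed

lemma sc_hh: "sc (\<i>/2) (cf hh) = cf kk"
proof -
  define D where "D = fps_exp (1/2::complex) - fps_exp (-1/2)"
  have Dne: "D \<noteq> 0"
  proof
    assume "D = 0"
    hence "fps_nth D 1 = 0" by simp
    thus False by (simp add: D_def)
  qed
  have "fps_const (\<i>/2) * (sc (\<i>/2) (cf hh) * D) = sc (\<i>/2) (cf hh) * fps_sin (\<i>/2)"
    by (simp add: sin_half_ii D_def mult_ac)
  also have "\<dots> = sc (\<i>/2) (cf (hh * fps_sin 1))"
    by (simp add: cf_mult sc_mult cf_sin sc_sin)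
  also have "\<dots> = fps_const (\<i>/2) * fps_X" by (simp add: hh_mult cf_X sc_X)
  finally have "sc (\<i>/2) (cf hh) * D = fps_X" by simp
  moreover have "cf kk * D = fps_X"
  proof -
    have "cf (kk * (fps_exp (1/2) - fps_exp (-1/2))) = fps_X" by (simp only: kk_rel cf_X)
    thus ?thesis by (simp add: cf_mult cf_diff cf_exp D_def)
  qed
  ultimately have "sc (\<i>/2) (cf hh) * D = cf kk * D" by simp
  thus ?thesis using Dne by simp
qed

lemma part2: "norlund (2 * v) (2*n) (real v) = (-1)^n * (1 / 2^(2*n)) * fact (2*n) * cosec_num (2 * v) n"
proof -
  have "sc (\<i>/2) (cf (hh^(2 * v))) = cf (kk^(2 * v))" by (simp add: cf_pow sc_pow sc_hh)
  hence "fps_nth (sc (\<i>/2) (cf (hh^(2 * v)))) (2*n) = fps_nth (cf (kk^(2 * v))) (2*n)" by simp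
  hence "(\<i>/2)^(2*n) * complex_of_real (fps_nth (hh^(2 * v)) (2*n)) = complex_of_real (fps_nth (kk^(2 * v)) (2*n))" by simp
  moreover have "(\<i>/2)^(2*n) = complex_of_real ((-1)^n / 2^(2*n))"
  proof -
    have s: "(\<i>/2)^2 = complex_of_real ((-1)/4)" by (simp add: power2_eq_square)
    have "(\<i>/2)^(2*n) = complex_of_real (((-1)/4)^n)" by (simp only: power_mult s of_real_power)
    also have "((-1)/4::real)^n = (-1)^n / 4^n" by (rule power_divide)
    also have "(4::real)^n = 2^(2*n)" by (simp add: power_mult)
    finally show ?thesis .
  qed
  ultimately have "complex_of_real ((-1)^n / 2^(2*n) * fps_nth (hh^(2 * v)) (2*n)) = complex_of_real (fps_nth (kk^(2 * v)) (2*n))"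
    by simp
  hence e: "fps_nth (kk^(2 * v)) (2*n) = (-1)^n / 2^(2*n) * fps_nth (hh^(2 * v)) (2*n)"
    using of_real_eq_iff by metis
  have "norlund (2 * v) (2*n) (real v) = fact (2*n) * fps_nth (kk^(2 * v)) (2*n)"
    by (simp add: norlund_gg kk_pow)
  also have "\<dots> = (-1)^n * (1 / 2^(2*n)) * fact (2*n) * cosec_num (2 * v) n"
    by (simp add: e cosec_num_def hh_def)
  finally show ?thesis .
qed


theorem mainTheorem11:
  fixes v n :: nat
  assumes "v \<ge> 1" and "n \<le> v - 1"
  shows "norlund (2 * v) (2 * n) (real v)
           = (-1)^n * fact (2 * n) * (Gamma (real (2 * v - 2 * n)) / Gamma (real (2 * v))) * esym_sq v n
       \<and> norlund (2 * v) (2 * n) (real v)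
           = (-1)^n * (1 / 2^(2 * n)) * fact (2 * n) * cosec_num (2 * v) n"
proof
  obtain w where w: "v = Suc w" using assms(1) by (cases v) auto
  have "n \<le> w" using assms(2) w by simp
  from part1[OF this] show "norlund (2 * v) (2 * n) (real v)
           = (-1)^n * fact (2 * n) * (Gamma (real (2 * v - 2 * n)) / Gamma (real (2 * v))) * esym_sq v n"
    by (simp only: w)
  show "norlund (2 * v) (2 * n) (real v)
           = (-1)^n * (1 / 2^(2 * n)) * fact (2 * n) * cosec_num (2 * v) n" by (rule part2)
qed

end
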